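(* Let $\mathcal R$ be a reaction network and $\mathcal U\subseteq\mathcal S$. Let $r_0\in\mathcal R_{\mathcal U}'$, $m\ge1$, $r_{11},\dots,r_{1m}\in\mathcal R_{\mathcal U}$ and $r_1=\oplus_{i=1}^m r_{1i}$, and suppose $r_0\oplus r_1\notin\overline{\mathcal R}_{\mathcal U}$. Then $r_0\in\mathcal R_{\mathcal U}'\setminus\mathcal R_{\mathcal U}$ and $r_0\oplus(\oplus_{i=1}^k r_{1i})\in\overline{\mathcal R}_{\mathcal U}'\setminus\overline{\mathcal R}_{\mathcal U}$ for $k=1,\dots,m-1$. If moreover $r_0\oplus r_1\in\overline{\mathcal R}_0$, then $r_{1m}\in\mathcal R_{\mathcal U}\setminus\mathcal R_{\mathcal U}'$ and $\oplus_{i=k}^m r_{1i}\in\overline{\mathcal R}_{\mathcal U}\setminus\overline{\mathcal R}_{\mathcal U}'$ for $k=1,\dots,m$.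
   Context: Species $S_1,\dots,S_n$ are the unit vectors of $\mathbb{N}_0^n$ and $\mathcal S=\{S_1,\dots,S_n\}$; for $x\in\mathbb{N}_0^n$, $\mathrm{supp}(x)=\{S_k: x^k>0\}$. A reaction network (RN) is a (possibly infinite) subset $\mathcal R\subseteq\mathbb{N}_0^n\times\mathbb{N}_0^n$ containing no $(y,y')$ with $y=y'$; elements $(y,y')$ are reactions $y\to y'$ with reactant $y$ and product $y'$. For $r_1=(y_1,y_1'),\ r_2=(y_2,y_2')$ define $r_1\oplus r_2=(y_1+0\vee(y_2-y_1'),\ y_2'+0\vee(y_1'-y_2))$ ($\vee$ componentwise maximum); it is associative. $\mathrm{cl}(A)$ is the set of all finite $\oplus$-sums of elements of $A$, including $(0,0)$. For $\mathcal U\subseteq\mathcal S$ and a set $B\subseteq\mathbb{N}_0^n\times\mathbb{N}_0^n$ write $B_{\mathcal U}=\{(y,y')\in B:\mathrm{supp}(y)\cap\mathcal U\neq\emptyset\}$ and $B_{\mathcal U}'=\{(y,y')\in B:\mathrm{supp}(y')\cap\mathcal U\neq\emptyset\}$. Set $\overline{\mathcal R}=\mathrm{cl}(\mathcal R)$, $\mathcal R_0=\mathcal R\setminus(\mathcal R_{\mathcal U}\cup\mathcal R_{\mathcal U}')$ and $\overline{\mathcal R}_0=\overline{\mathcal R}\setminus(\overline{\mathcal R}_{\mathcal U}\cup\overline{\mathcal R}_{\mathcal U}')$. *)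

theory Defs
  imports Main
begin

type_synonym 's complex = "'s \<Rightarrow> nat"
type_synonym 's reaction = "'s complex \<times> 's complex"

definition supp :: "'s complex \<Rightarrow> 's set" where
  "supp x = {k. x k > 0}"

definition is_RN :: "'s reaction set \<Rightarrow> bool" where
  "is_RN R \<longleftrightarrow> (\<forall>(y, y') \<in> R. y \<noteq> y')"

text \<open>r1 (+) r2 = (y1 + max 0 (y2 - y1'), y2' + max 0 (y1' - y2)); on nat,
truncated subtraction is exactly max 0 (a - b).\<close>
definition oplus :: "'s reaction \<Rightarrow> 's reaction \<Rightarrow> 's reaction" (infixr "\<oplus>\<^sub>R" 65) where
  "oplus r1 r2 = (\<lambda>k. fst r1 k + (fst r2 k - snd r1 k), \<lambda>k. snd r2 k + (snd r1 k - fst r2 k))"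

fun oplus_list :: "'s reaction list \<Rightarrow> 's reaction" where
  "oplus_list [] = (\<lambda>_. 0, \<lambda>_. 0)"
| "oplus_list (r # rs) = r \<oplus>\<^sub>R oplus_list rs"

definition oplus_seq :: "(nat \<Rightarrow> 's reaction) \<Rightarrow> nat \<Rightarrow> nat \<Rightarrow> 's reaction" where
  "oplus_seq f i j = oplus_list (map f [i..<Suc j])"

text \<open>cl(A): all finite (+)-sums of elements of A, including (0,0).\<close>
definition cl :: "'s reaction set \<Rightarrow> 's reaction set" where
  "cl A = {oplus_list rs | rs. set rs \<subseteq> A}"

definition reac_U :: "'s set \<Rightarrow> 's reaction set \<Rightarrow> 's reaction set" where
  "reac_U U B = {(y, y') \<in> B. supp y \<inter> U \<noteq> {}}"

definition prod_U :: "'s set \<Rightarrow> 's reaction set \<Rightarrow> 's reaction set" where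
  "prod_U U B = {(y, y') \<in> B. supp y' \<inter> U \<noteq> {}}"

definition zero_U :: "'s set \<Rightarrow> 's reaction set \<Rightarrow> 's reaction set" where
  "zero_U U B = B - (reac_U U B \<union> prod_U U B)"

end

theory Submission
  imports Defs
begin

lemma oplus_assoc: "(a \<oplus>\<^sub>R b) \<oplus>\<^sub>R c = a \<oplus>\<^sub>R (b \<oplus>\<^sub>R c)"
  by (auto simp: oplus_def fun_eq_iff)

lemma oplus_zero_l: "(\<lambda>_. 0, \<lambda>_. 0) \<oplus>\<^sub>R r = r"
  by (cases r) (auto simp: oplus_def)

lemma oplus_list_append: "oplus_list (xs @ ys) = oplus_list xs \<oplus>\<^sub>R oplus_list ys"
  by (induction xs) (auto simp: oplus_zero_l oplus_assoc)

lemma supp_fst: "supp (fst A) \<subseteq> supp (fst (A \<oplus>\<^sub>R B))"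
  by (auto simp: supp_def oplus_def)

lemma supp_snd: "supp (snd B) \<subseteq> supp (snd (A \<oplus>\<^sub>R B))"
  by (auto simp: supp_def oplus_def)

lemma supp_mid: "s \<notin> supp (fst (A \<oplus>\<^sub>R B)) \<Longrightarrow> s \<in> supp (fst B) \<Longrightarrow> s \<in> supp (snd A)"
  by (auto simp: supp_def oplus_def)

lemma in_cl: "set rs \<subseteq> R \<Longrightarrow> oplus_list rs \<in> cl R"
  by (auto simp: cl_def)

lemma reacU_iff: "r \<in> reac_U U B \<longleftrightarrow> r \<in> B \<and> supp (fst r) \<inter> U \<noteq> {}"
  by (cases r) (auto simp: reac_U_def)

lemma prodU_iff: "r \<in> prod_U U B \<longleftrightarrow> r \<in> B \<and> supp (snd r) \<inter> U \<noteq> {}"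
  by (cases r) (auto simp: prod_U_def)

theorem lemma4p5:
  fixes R :: "('s::finite) reaction set" and U :: "'s set"
    and r0 :: "'s reaction" and r1i :: "nat \<Rightarrow> 's reaction" and m :: nat
  assumes "is_RN R"
    and "r0 \<in> prod_U U R"
    and "m \<ge> 1"
    and "\<forall>i\<in>{1..m}. r1i i \<in> reac_U U R"
    and "r0 \<oplus>\<^sub>R oplus_seq r1i 1 m \<notin> reac_U U (cl R)"
  shows "r0 \<in> prod_U U R - reac_U U R
      \<and> (\<forall>k\<in>{1..m-1}. r0 \<oplus>\<^sub>R oplus_seq r1i 1 k \<in> prod_U U (cl R) - reac_U U (cl R))
      \<and> (r0 \<oplus>\<^sub>R oplus_seq r1i 1 m \<in> zero_U U (cl R) \<longrightarrow>
           r1i m \<in> reac_U U R - prod_U U R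
         \<and> (\<forall>k\<in>{1..m}. oplus_seq r1i k m \<in> reac_U U (cl R) - prod_U U (cl R)))"
proof -
  define W where "W = r0 \<oplus>\<^sub>R oplus_seq r1i 1 m"
  have r0R: "r0 \<in> R" using assms(2) by (simp add: prodU_iff)
  have r1R: "\<And>i. i \<in> {1..m} \<Longrightarrow> r1i i \<in> R" using assms(4) by (simp add: reacU_iff)
  have setsub: "\<And>a b. 1 \<le> a \<Longrightarrow> b \<le> Suc m \<Longrightarrow> set (map r1i [a..<b]) \<subseteq> R"
    using r1R by auto
  have Wcl: "W \<in> cl R"
    unfolding W_def oplus_seq_def
    using in_cl[of "r0 # map r1i [1..<Suc m]" R] r0R setsub[of 1 "Suc m"] by auto
  have WnU: "supp (fst W) \<inter> U = {}" using assms(5) Wcl by (auto simp: reacU_iff W_def)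
  have decomp: "W = (r0 \<oplus>\<^sub>R oplus_list (map r1i [1..<k])) \<oplus>\<^sub>R oplus_list (map r1i [k..<Suc m])"
    if "1 \<le> k" "k \<le> m" for k
  proof -
    have "[1..<Suc m] = [1..<k] @ [k..<Suc m]" using that
      using upt_add_eq_append[of 1 k "Suc m - k"] by simp
    thus ?thesis unfolding W_def oplus_seq_def by (simp add: oplus_list_append oplus_assoc)
  qed
  have tailU: "supp (fst (oplus_list (map r1i [k..<Suc m]))) \<inter> U \<noteq> {}"
    if "1 \<le> k" "k \<le> m" for k
  proof -
    have "[k..<Suc m] = k # [Suc k..<Suc m]" using that by (simp add: upt_conv_Cons)
    hence "oplus_list (map r1i [k..<Suc m]) = r1i k \<oplus>\<^sub>R oplus_list (map r1i [Suc k..<Suc m])" by simp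
    moreover have "supp (fst (r1i k)) \<inter> U \<noteq> {}" using assms(4) that by (auto simp: reacU_iff)
    ultimately show ?thesis using supp_fst[of "r1i k" "oplus_list (map r1i [Suc k..<Suc m])"] by (simp only:) blast
  qed
  have P1: "r0 \<in> prod_U U R - reac_U U R"
  proof -
    have "supp (fst r0) \<subseteq> supp (fst W)" unfolding W_def by (rule supp_fst)
    thus ?thesis using assms(2) WnU by (auto simp: reacU_iff)
  qed
  have P2: "\<forall>k\<in>{1..m-1}. r0 \<oplus>\<^sub>R oplus_seq r1i 1 k \<in> prod_U U (cl R) - reac_U U (cl R)"
  proof
    fix k assume k: "k \<in> {1..m-1}"
    define A where "A = r0 \<oplus>\<^sub>R oplus_seq r1i 1 k"
    define B where "B = oplus_list (map r1i [Suc k..<Suc m])"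
    have kk: "1 \<le> Suc k" "Suc k \<le> m" using k by auto
    from decomp[OF kk] have WAB: "W = A \<oplus>\<^sub>R B"
      by (simp only: A_def B_def oplus_seq_def)
    have Acl: "A \<in> cl R" unfolding A_def oplus_seq_def
      using in_cl[of "r0 # map r1i [1..<Suc k]" R] r0R setsub[of 1 "Suc k"] k by auto
    have "supp (fst A) \<inter> U = {}" using supp_fst[of A B] WAB WnU by auto
    moreover obtain s where s: "s \<in> U" "s \<in> supp (fst B)" using tailU[OF kk] unfolding B_def by blast
    then have "s \<in> supp (snd A)" using supp_mid[of s A B] WAB WnU by auto
    ultimately show "A \<in> prod_U U (cl R) - reac_U U (cl R)" using Acl s
      by (auto simp: reacU_iff prodU_iff)
  qed
  have P3: "W \<in> zero_U U (cl R) \<longrightarrow>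
           r1i m \<in> reac_U U R - prod_U U R
         \<and> (\<forall>k\<in>{1..m}. oplus_seq r1i k m \<in> reac_U U (cl R) - prod_U U (cl R))"
  proof
    assume "W \<in> zero_U U (cl R)"
    hence Wp: "supp (snd W) \<inter> U = {}" using Wcl by (auto simp: zero_U_def prodU_iff)
    have Q: "\<forall>k\<in>{1..m}. oplus_seq r1i k m \<in> reac_U U (cl R) - prod_U U (cl R)"
    proof
      fix k assume k: "k \<in> {1..m}"
      have "supp (snd (oplus_seq r1i k m)) \<inter> U = {}"
      proof -
        have kk: "1 \<le> k" "k \<le> m" using k by auto
        have "W = (r0 \<oplus>\<^sub>R oplus_list (map r1i [1..<k])) \<oplus>\<^sub>R oplus_seq r1i k m"
          using decomp[OF kk] by (simp only: oplus_seq_def)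
        thus ?thesis using supp_snd[of "oplus_seq r1i k m" "r0 \<oplus>\<^sub>R oplus_list (map r1i [1..<k])"] Wp
          by blast
      qed
      moreover have "oplus_seq r1i k m \<in> cl R" unfolding oplus_seq_def
        using in_cl[OF setsub[of k "Suc m"]] k by auto
      ultimately show "oplus_seq r1i k m \<in> reac_U U (cl R) - prod_U U (cl R)"
        using tailU[of k] k by (auto simp: reacU_iff prodU_iff oplus_seq_def)
    qed
    have eq: "oplus_seq r1i m m = r1i m"
      by (cases "r1i m") (simp add: oplus_seq_def oplus_def)
    have "oplus_seq r1i m m \<in> reac_U U (cl R) - prod_U U (cl R)" using Q assms(3) by auto
    hence X: "r1i m \<in> reac_U U (cl R) - prod_U U (cl R)" by (simp only: eq)
    have A0: "r1i m \<in> reac_U U (cl R)" using X by (rule DiffD1)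
    have B: "r1i m \<notin> prod_U U (cl R)" using X by (simp only: Diff_iff not_False_eq_True)
    have A: "r1i m \<in> cl R" using A0 unfolding reacU_iff by (rule conjunct1)
    have C: "supp (snd (r1i m)) \<inter> U = {}" using A B by (simp add: prodU_iff)
    have D: "r1i m \<notin> prod_U U R" using C by (simp add: prodU_iff)
    have E: "r1i m \<in> reac_U U R" using assms(4) assms(3) by auto
    have "r1i m \<in> reac_U U R - prod_U U R" using D E by (rule DiffI[rotated])
    with Q show "r1i m \<in> reac_U U R - prod_U U R
         \<and> (\<forall>k\<in>{1..m}. oplus_seq r1i k m \<in> reac_U U (cl R) - prod_U U (cl R))" by blast
  qed
  show ?thesis using P1 P2 P3 unfolding W_def by (intro conjI)
qed

end
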